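(* If $L$ is a regular language, then ${\rm pssr}(L)$ is context-free.
   Context: For words $x=a_1\cdots a_n$, $y=b_1\cdots b_n$ of the same length, the perfect shuffle is $x\,\text{sh}\,y=a_1b_1a_2b_2\cdots a_nb_n$. $x^R$ denotes the reversal of $x$. For a language $L$, ${\rm pssr}(L)=\{x\,\text{sh}\,x^R : x\in L\}$. *)

theory Defs
  imports Main
begin

datatype 'a rexp = Zero | One | Atom 'a | Plus "'a rexp" "'a rexp"
  | Times "'a rexp" "'a rexp" | Star "'a rexp"

definition conc :: "'a list set \<Rightarrow> 'a list set \<Rightarrow> 'a list set" where
  "conc A B = {u @ v | u v. u \<in> A \<and> v \<in> B}"

inductive_set kleene_star :: "'a list set \<Rightarrow> 'a list set" for A where
  star_Nil: "[] \<in> kleene_star A"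
| star_app: "u \<in> A \<Longrightarrow> v \<in> kleene_star A \<Longrightarrow> u @ v \<in> kleene_star A"

fun lang :: "'a rexp \<Rightarrow> 'a list set" where
  "lang Zero = {}"
| "lang One = {[]}"
| "lang (Atom a) = {[a]}"
| "lang (Plus r s) = lang r \<union> lang s"
| "lang (Times r s) = conc (lang r) (lang s)"
| "lang (Star r) = kleene_star (lang r)"

definition regular :: "'a list set \<Rightarrow> bool" where
  "regular L \<longleftrightarrow> (\<exists>r. lang r = L)"

text \<open>Nonterminals are natural numbers; a symbol is either a nonterminal (Inl)
  or a terminal (Inr). A grammar is a finite set of productions with a start symbol.\<close>

type_synonym 'a prod = "nat \<times> (nat + 'a) list"

inductive derives1 :: "'a prod set \<Rightarrow> (nat + 'a) list \<Rightarrow> (nat + 'a) list \<Rightarrow> bool"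
  for P where
  "(A, \<alpha>) \<in> P \<Longrightarrow> derives1 P (u @ [Inl A] @ v) (u @ \<alpha> @ v)"

definition derives :: "'a prod set \<Rightarrow> (nat + 'a) list \<Rightarrow> (nat + 'a) list \<Rightarrow> bool" where
  "derives P = (derives1 P)\<^sup>*\<^sup>*"

definition cfg_lang :: "'a prod set \<Rightarrow> nat \<Rightarrow> 'a list set" where
  "cfg_lang P S = {w. derives P [Inl S] (map Inr w)}"

definition context_free :: "'a list set \<Rightarrow> bool" where
  "context_free L \<longleftrightarrow> (\<exists>P S. finite P \<and> cfg_lang P S = L)"

fun perfect_shuffle :: "'a list \<Rightarrow> 'a list \<Rightarrow> 'a list" where
  "perfect_shuffle (a # xs) (b # ys) = a # b # perfect_shuffle xs ys"
| "perfect_shuffle _ _ = []"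

definition pssr :: "'a list set \<Rightarrow> 'a list set" where
  "pssr L = {perfect_shuffle x (rev x) | x. x \<in> L}"

end

theory Submission
  imports Defs
begin

definition LQ :: "'a list \<Rightarrow> 'a list set \<Rightarrow> 'a list set" where
  "LQ w A = {y. w @ y \<in> A}"
definition RQ :: "'a list \<Rightarrow> 'a list set \<Rightarrow> 'a list set" where
  "RQ v A = {y. y @ v \<in> A}"

lemma star_append: "u \<in> kleene_star A \<Longrightarrow> v \<in> kleene_star A \<Longrightarrow> u @ v \<in> kleene_star A"
  by (induction rule: kleene_star.induct) (simp_all, metis append.assoc kleene_star.star_app)

lemma star_split:
  assumes "x \<in> kleene_star A"
  shows "x = w @ y \<Longrightarrow> (w \<in> kleene_star A \<and> y \<in> kleene_star A) \<or>
    (\<exists>u v z t. w = u@v \<and> u \<in> kleene_star A \<and> v \<noteq> [] \<and> v@z \<in> A \<and> t \<in> kleene_star A \<and> y = z@t)"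
  using assms
proof (induction arbitrary: w y)
  case star_Nil then show ?case by (auto intro: kleene_star.star_Nil)
next
  case (star_app a b)
  from star_app.prems have "a @ b = w @ y" by simp
  then obtain us where "(w = a@us \<and> us@y = b) \<or> (w@us = a \<and> y = us@b)"
    by (auto simp: append_eq_append_conv2)
  then show ?case
  proof
    assume h: "w = a@us \<and> us@y = b"
    from star_app.IH[of us y] h have
      "(us \<in> kleene_star A \<and> y \<in> kleene_star A) \<or> (\<exists>u v z t. us = u@v \<and> u \<in> kleene_star A \<and> v \<noteq> [] \<and> v@z \<in> A \<and> t \<in> kleene_star A \<and> y = z@t)"
      by simp
    then show ?case
    proof
      assume "us \<in> kleene_star A \<and> y \<in> kleene_star A"
      then show ?thesis using h star_app.hyps(1) by (auto intro: kleene_star.star_app)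
    next
      assume "\<exists>u v z t. us = u@v \<and> u \<in> kleene_star A \<and> v \<noteq> [] \<and> v@z \<in> A \<and> t \<in> kleene_star A \<and> y = z@t"
      then obtain u v z t where *: "us = u@v" "u \<in> kleene_star A" "v \<noteq> []" "v@z \<in> A" "t \<in> kleene_star A" "y = z@t"
        by blast
      have "w = (a@u)@v" using h * by simp
      moreover have "a@u \<in> kleene_star A" using * star_app.hyps(1) by (auto intro: kleene_star.star_app)
      ultimately show ?thesis using * by blast
    qed
  next
    assume h: "w@us = a \<and> y = us@b"
    show ?case
    proof (cases "w = []")
      case True
      then have "y = a @ b" using h by simp
      then show ?thesis using True star_app.hyps by (auto intro: kleene_star.intros)
    next
      case False
      have "w = [] @ w" by simp
      then show ?thesis using False h star_app.hyps by (blast intro: kleene_star.star_Nil)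
    qed
  qed
qed

lemma LQ_star: "LQ w (kleene_star A) = (if w \<in> kleene_star A then kleene_star A else {})
   \<union> conc (\<Union>{LQ v A | v. v \<noteq> [] \<and> (\<exists>u. u \<in> kleene_star A \<and> w = u@v)}) (kleene_star A)"
proof (rule set_eqI, rule iffI)
  fix y assume "y \<in> LQ w (kleene_star A)"
  then have "w @ y \<in> kleene_star A" by (simp add: LQ_def)
  from star_split[OF this refl] show "y \<in> (if w \<in> kleene_star A then kleene_star A else {})
   \<union> conc (\<Union>{LQ v A | v. v \<noteq> [] \<and> (\<exists>u. u \<in> kleene_star A \<and> w = u@v)}) (kleene_star A)"
  proof
    assume "w \<in> kleene_star A \<and> y \<in> kleene_star A" then show ?thesis by simp
  next
    assume "\<exists>u v z t. w = u@v \<and> u \<in> kleene_star A \<and> v \<noteq> [] \<and> v@z \<in> A \<and> t \<in> kleene_star A \<and> y = z@t"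
    then obtain u v z t where *: "w = u@v" "u \<in> kleene_star A" "v \<noteq> []" "v@z \<in> A" "t \<in> kleene_star A" "y = z@t"
      by blast
    have "z \<in> LQ v A" using * by (simp add: LQ_def)
    then have "z \<in> \<Union>{LQ v A | v. v \<noteq> [] \<and> (\<exists>u. u \<in> kleene_star A \<and> w = u@v)}" using * by blast
    then have "y \<in> conc (\<Union>{LQ v A | v. v \<noteq> [] \<and> (\<exists>u. u \<in> kleene_star A \<and> w = u@v)}) (kleene_star A)"
      using * unfolding conc_def by blast
    then show ?thesis by blast
  qed
next
  fix y assume "y \<in> (if w \<in> kleene_star A then kleene_star A else {})
   \<union> conc (\<Union>{LQ v A | v. v \<noteq> [] \<and> (\<exists>u. u \<in> kleene_star A \<and> w = u@v)}) (kleene_star A)"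
  then show "y \<in> LQ w (kleene_star A)"
  proof
    assume "y \<in> (if w \<in> kleene_star A then kleene_star A else {})"
    then show ?thesis by (auto simp: LQ_def star_append split: if_splits)
  next
    assume "y \<in> conc (\<Union>{LQ v A | v. v \<noteq> [] \<and> (\<exists>u. u \<in> kleene_star A \<and> w = u@v)}) (kleene_star A)"
    then obtain z t v u where *: "y = z @ t" "v @ z \<in> A" "t \<in> kleene_star A" "u \<in> kleene_star A" "w = u@v"
      by (auto simp: conc_def LQ_def)
    have "(v@z)@t \<in> kleene_star A" using * by (rule_tac kleene_star.star_app) auto
    then have "u @ ((v@z)@t) \<in> kleene_star A" using * star_append by blast
    then show ?thesis using * by (simp add: LQ_def)
  qed
qed

lemma LQ_conc: "LQ w (conc A B) = conc (LQ w A) B \<union> \<Union>{LQ v B | v. \<exists>u. u\<in>A \<and> w=u@v}"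
proof (rule set_eqI, rule iffI)
  fix y assume "y \<in> LQ w (conc A B)"
  then obtain a b where ab: "w @ y = a @ b" "a \<in> A" "b \<in> B" by (auto simp: LQ_def conc_def)
  then obtain us where "(w = a@us \<and> us@y = b) \<or> (w@us = a \<and> y = us@b)"
    by (auto simp: append_eq_append_conv2)
  then show "y \<in> conc (LQ w A) B \<union> \<Union>{LQ v B | v. \<exists>u. u\<in>A \<and> w=u@v}"
  proof
    assume h: "w = a@us \<and> us@y = b"
    then have "y \<in> LQ us B" using ab by (simp add: LQ_def)
    then show ?thesis using h ab by blast
  next
    assume h: "w@us = a \<and> y = us@b"
    then have "us \<in> LQ w A" using ab by (simp add: LQ_def)
    then show ?thesis using h ab unfolding conc_def by blast
  qed
next
  fix y assume "y \<in> conc (LQ w A) B \<union> \<Union>{LQ v B | v. \<exists>u. u\<in>A \<and> w=u@v}"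
  then show "y \<in> LQ w (conc A B)"
  proof
    assume "y \<in> conc (LQ w A) B"
    then obtain z t where "y = z@t" "w@z \<in> A" "t \<in> B" by (auto simp: conc_def LQ_def)
    then have "w @ y = (w@z) @ t" by simp
    then show ?thesis using \<open>w@z \<in> A\<close> \<open>t \<in> B\<close> unfolding LQ_def conc_def by blast
  next
    assume "y \<in> \<Union>{LQ v B | v. \<exists>u. u\<in>A \<and> w=u@v}"
    then obtain u v where "u \<in> A" "w = u@v" "v@y \<in> B" by (auto simp: LQ_def)
    then show ?thesis unfolding LQ_def conc_def by auto
  qed
qed


lemma LQ_Un: "LQ w (A \<union> B) = LQ w A \<union> LQ w B" by (auto simp: LQ_def)

lemma finite_LQ: "finite (range (\<lambda>w. LQ w (lang r)))"
proof (induction r)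
  case Zero
  have "range (\<lambda>w. LQ w (lang Zero)) \<subseteq> {{}}" by (auto simp: LQ_def)
  then show ?case by (rule finite_subset) simp
next
  case One
  have "range (\<lambda>w. LQ w (lang One)) \<subseteq> {{}, {[]}}" by (auto simp: LQ_def)
  then show ?case by (rule finite_subset) simp
next
  case (Atom a)
  have "range (\<lambda>w. LQ w (lang (Atom a))) \<subseteq> {{}, {[]}, {[a]}}"
  proof
    fix X assume "X \<in> range (\<lambda>w. LQ w (lang (Atom a)))"
    then obtain w where X: "X = LQ w {[a]}" by auto
    show "X \<in> {{}, {[]}, {[a]}}"
    proof (cases w)
      case Nil then show ?thesis using X by (auto simp: LQ_def)
    next
      case (Cons c w')
      then show ?thesis using X by (cases "c = a \<and> w' = []") (auto simp: LQ_def)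
    qed
  qed
  then show ?case by (rule finite_subset) simp
next
  case (Plus r s)
  have "range (\<lambda>w. LQ w (lang (Plus r s))) \<subseteq>
     (\<lambda>(X,Y). X \<union> Y) ` (range (\<lambda>w. LQ w (lang r)) \<times> range (\<lambda>w. LQ w (lang s)))"
    by (auto simp: LQ_Un)
  then show ?case by (rule finite_subset) (use Plus in auto)
next
  case (Times r s)
  have "range (\<lambda>w. LQ w (lang (Times r s))) \<subseteq>
     (\<lambda>(X,S). conc X (lang s) \<union> \<Union>S) ` (range (\<lambda>w. LQ w (lang r)) \<times> Pow (range (\<lambda>w. LQ w (lang s))))"
  proof
    fix X assume "X \<in> range (\<lambda>w. LQ w (lang (Times r s)))"
    then obtain w where X: "X = LQ w (lang (Times r s))" by auto
    show "X \<in> (\<lambda>(X,S). conc X (lang s) \<union> \<Union>S) ` (range (\<lambda>w. LQ w (lang r)) \<times> Pow (range (\<lambda>w. LQ w (lang s))))"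
      by (rule image_eqI[where x="(LQ w (lang r), {LQ v (lang s) | v. \<exists>u. u\<in>lang r \<and> w=u@v})"])
        (auto simp: X LQ_conc)
  qed
  then show ?case by (rule finite_subset) (use Times in auto)
next
  case (Star r)
  let ?K = "kleene_star (lang r)"
  have "range (\<lambda>w. LQ w (lang (Star r))) \<subseteq>
     (\<lambda>(b,S). (if b then ?K else {}) \<union> conc (\<Union>S) ?K) ` (UNIV \<times> Pow (range (\<lambda>w. LQ w (lang r))))"
  proof
    fix X assume "X \<in> range (\<lambda>w. LQ w (lang (Star r)))"
    then obtain w where X: "X = LQ w ?K" by auto
    show "X \<in> (\<lambda>(b,S). (if b then ?K else {}) \<union> conc (\<Union>S) ?K) ` (UNIV \<times> Pow (range (\<lambda>w. LQ w (lang r))))"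
      by (rule image_eqI[where x="(w \<in> ?K, {LQ v (lang r) | v. v \<noteq> [] \<and> (\<exists>u. u \<in> ?K \<and> w = u@v)})"])
        (simp add: X LQ_star, blast)
  qed
  then show ?case by (rule finite_subset) (use Star in auto)
qed

fun revr :: "'a rexp \<Rightarrow> 'a rexp" where
  "revr Zero = Zero"
| "revr One = One"
| "revr (Atom a) = Atom a"
| "revr (Plus r s) = Plus (revr r) (revr s)"
| "revr (Times r s) = Times (revr s) (revr r)"
| "revr (Star r) = Star (revr r)"

lemma rev_star: "x \<in> kleene_star A \<Longrightarrow> rev x \<in> kleene_star (rev ` A)"
proof (induction rule: kleene_star.induct)
  case star_Nil then show ?case by (simp add: kleene_star.star_Nil)
next
  case (star_app u v)
  have "rev u \<in> kleene_star (rev ` A)"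
    using kleene_star.star_app[of "rev u" "rev ` A" "[]"] star_app.hyps(1) by (simp add: kleene_star.star_Nil)
  then show ?case using star_app.IH star_append by fastforce
qed

lemma rev_star_eq: "rev ` kleene_star A = kleene_star (rev ` A)"
proof
  show "rev ` kleene_star A \<subseteq> kleene_star (rev ` A)" using rev_star by blast
next
  show "kleene_star (rev ` A) \<subseteq> rev ` kleene_star A"
  proof
    fix x assume "x \<in> kleene_star (rev ` A)"
    then have "rev x \<in> kleene_star (rev ` rev ` A)" by (rule rev_star)
    then have "rev x \<in> kleene_star A" by (simp add: image_image)
    then show "x \<in> rev ` kleene_star A" by (rule rev_image_eqI) simp
  qed
qed

lemma rev_conc: "rev ` conc A B = conc (rev ` B) (rev ` A)"
proof
  show "rev ` conc A B \<subseteq> conc (rev ` B) (rev ` A)" 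
  proof
    fix x assume "x \<in> rev ` conc A B"
    then obtain a b where "x = rev b @ rev a" "a \<in> A" "b \<in> B" unfolding conc_def by auto
    then show "x \<in> conc (rev ` B) (rev ` A)" unfolding conc_def by blast
  qed
next
  show "conc (rev ` B) (rev ` A) \<subseteq> rev ` conc A B"
  proof
    fix x assume "x \<in> conc (rev ` B) (rev ` A)"
    then obtain a b where "x = rev b @ rev a" "a \<in> A" "b \<in> B" unfolding conc_def by auto
    then have "x = rev (a @ b)" "a @ b \<in> conc A B" unfolding conc_def by auto
    then show "x \<in> rev ` conc A B" by blast
  qed
qed

lemma lang_revr: "lang (revr r) = rev ` lang r"
  by (induction r) (auto simp: rev_conc rev_star_eq image_Un)


definition D :: "'a \<Rightarrow> 'a \<Rightarrow> 'a list set \<Rightarrow> 'a list set" where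
  "D a b K = {y. a # y @ [b] \<in> K}"

definition G :: "('a list set \<Rightarrow> nat) \<Rightarrow> 'a list set set \<Rightarrow> 'a set \<Rightarrow> 'a prod set" where
  "G enc CS S = {(enc K, []) | K. K \<in> CS \<and> [] \<in> K}
    \<union> {(enc K, [Inr a, Inr a]) | K a. K \<in> CS \<and> a \<in> S \<and> [a] \<in> K}
    \<union> {(enc K, [Inr a, Inr b, Inl (enc (D a b K)), Inr b, Inr a]) | K a b. K \<in> CS \<and> a \<in> S \<and> b \<in> S}"

lemma ps_snoc: "length xs = length ys \<Longrightarrow>
  perfect_shuffle (xs @ [c]) (ys @ [d]) = perfect_shuffle xs ys @ [c, d]"
proof (induction xs arbitrary: ys)
  case Nil then show ?case by simp
next
  case (Cons x xs) then show ?case by (cases ys) auto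
qed

lemma ps_outer: "perfect_shuffle (a # y @ [b]) (rev (a # y @ [b])) = [a, b] @ perfect_shuffle y (rev y) @ [b, a]"
  by (simp add: ps_snoc)

lemma derives1_ctx: "derives1 P \<alpha> \<beta> \<Longrightarrow> derives1 P (u @ \<alpha> @ v) (u @ \<beta> @ v)"
proof (induction rule: derives1.induct)
  case (1 A \<alpha> u' v')
  from derives1.intros[OF 1, of "u @ u'" "v' @ v"] show ?case by simp
qed

lemma derives_ctx: "derives P \<alpha> \<beta> \<Longrightarrow> derives P (u @ \<alpha> @ v) (u @ \<beta> @ v)"
  unfolding derives_def
proof (induction rule: rtranclp_induct)
  case base then show ?case by simp
next
  case (step y z) then show ?case by (meson derives1_ctx rtranclp.rtrancl_into_rtrancl)
qed

lemma complete:
  assumes closed: "\<forall>K\<in>CS. \<forall>a b. D a b K \<in> CS"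
  shows "K \<in> CS \<Longrightarrow> x \<in> K \<Longrightarrow> set x \<subseteq> S \<Longrightarrow>
    derives (G enc CS S) [Inl (enc K)] (map Inr (perfect_shuffle x (rev x)))"
proof (induction x arbitrary: K rule: length_induct)
  case (1 x)
  show ?case
  proof (cases "length x \<le> 1")
    case True
    then consider "x = []" | a where "x = [a]" by (cases x) auto
    then show ?thesis
    proof cases
      case 1
      then have "(enc K, []) \<in> G enc CS S" using \<open>K \<in> CS\<close> \<open>x \<in> K\<close> unfolding G_def by blast
      then have "derives1 (G enc CS S) ([] @ [Inl (enc K)] @ []) ([] @ [] @ [])" by (rule derives1.intros)
      then show ?thesis using 1 unfolding derives_def by simp
    next
      case 2
      have "[a] \<in> K" using 2 \<open>x \<in> K\<close> by (rule subst)
      have "a \<in> S" using \<open>set x \<subseteq> S\<close> unfolding \<open>x = [a]\<close> by simp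
      then have "(enc K, [Inr a, Inr a]) \<in> G enc CS S" using \<open>K \<in> CS\<close> \<open>[a] \<in> K\<close>
        unfolding G_def by blast
      then have "derives1 (G enc CS S) ([] @ [Inl (enc K)] @ []) ([] @ [Inr a, Inr a] @ [])" by (rule derives1.intros)
      then show ?thesis using 2 unfolding derives_def by simp
    qed
  next
    case False
    obtain a x' where x1: "x = a # x'" using False by (cases x) auto
    then have "x' \<noteq> []" using False by auto
    then obtain y b where "x' = y @ [b]" by (cases x' rule: rev_exhaust) auto
    then have x: "x = a # y @ [b]" using x1 by simp
    have ab: "a \<in> S" "b \<in> S" "set y \<subseteq> S" using 1(4) x by auto
    have yK: "y \<in> D a b K" using 1(3) x by (simp add: D_def)
    have DK: "D a b K \<in> CS" using closed 1(2) by blast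
    have IH: "derives (G enc CS S) [Inl (enc (D a b K))] (map Inr (perfect_shuffle y (rev y)))"
    proof -
      have "length y < length x" using x by simp
      then show ?thesis using 1(1) yK DK ab(3) by blast
    qed
    have "(enc K, [Inr a, Inr b, Inl (enc (D a b K)), Inr b, Inr a]) \<in> G enc CS S"
      using 1(2) ab unfolding G_def by blast
    then have "derives1 (G enc CS S) ([] @ [Inl (enc K)] @ [])
        ([] @ [Inr a, Inr b, Inl (enc (D a b K)), Inr b, Inr a] @ [])" by (rule derives1.intros)
    then have s1: "derives (G enc CS S) [Inl (enc K)] ([Inr a, Inr b] @ [Inl (enc (D a b K))] @ [Inr b, Inr a])"
      unfolding derives_def by simp
    have s2: "derives (G enc CS S) ([Inr a, Inr b] @ [Inl (enc (D a b K))] @ [Inr b, Inr a])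
       ([Inr a, Inr b] @ map Inr (perfect_shuffle y (rev y)) @ [Inr b, Inr a])"
      by (rule derives_ctx[OF IH])
    have eq: "map Inr (perfect_shuffle x (rev x)) = [Inr a, Inr b] @ map Inr (perfect_shuffle y (rev y)) @ [Inr b, Inr a]"
      unfolding x ps_outer by simp
    show ?thesis using rtranclp_trans[OF s1[unfolded derives_def] s2[unfolded derives_def]] unfolding derives_def eq by simp
  qed
qed

lemma split_unique: "u @ [Inl A] @ v = map Inr p @ [Inl B] @ map Inr s \<Longrightarrow>
   u = map Inr p \<and> A = B \<and> v = map Inr s"
proof (induction u arbitrary: p)
  case Nil then show ?case by (cases p) auto
next
  case (Cons c u)
  show ?case
  proof (cases p)
    case Nil
    then have "u @ [Inl A] @ v = map Inr s" using Cons.prems by simp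
    then have "Inl A \<in> set (map Inr s)" by (metis Un_iff in_set_conv_decomp set_append)
    then show ?thesis by auto
  next
    case (Cons d p')
    then show ?thesis using Cons.prems Cons.IH[of p'] by auto
  qed
qed

definition Inv where
  "Inv enc CS K0 \<phi> \<longleftrightarrow> (\<exists>x\<in>K0. \<phi> = map Inr (perfect_shuffle x (rev x))) \<or>
    (\<exists>p s K. K \<in> CS \<and> \<phi> = map Inr p @ [Inl (enc K)] @ map Inr s \<and>
       (\<forall>y\<in>K. \<exists>x\<in>K0. p @ perfect_shuffle y (rev y) @ s = perfect_shuffle x (rev x)))"

lemma sound:
  assumes inj: "inj_on enc CS" and closed: "\<forall>K\<in>CS. \<forall>a b. D a b K \<in> CS" and K0: "K0 \<in> CS"
  shows "derives (G enc CS S) [Inl (enc K0)] \<phi> \<Longrightarrow> Inv enc CS K0 \<phi>"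
  unfolding derives_def
proof (induction rule: rtranclp_induct)
  case base
  show ?case unfolding Inv_def using K0
    by (intro disjI2 exI[of _ "[]"] exI[of _ K0]) auto
next
  case (step \<phi> \<psi>)
  from step.hyps(2) obtain u A v \<alpha> where d: "\<phi> = u @ [Inl A] @ v" "\<psi> = u @ \<alpha> @ v" "(A, \<alpha>) \<in> G enc CS S"
    by (cases rule: derives1.cases) auto
  from step.IH[unfolded Inv_def] show ?case
  proof
    assume "\<exists>x\<in>K0. \<phi> = map Inr (perfect_shuffle x (rev x))"
    then obtain x where "\<phi> = map Inr (perfect_shuffle x (rev x))" by blast
    moreover have "Inl A \<in> set \<phi>" using d by simp
    ultimately have "Inl A \<in> Inr ` set (perfect_shuffle x (rev x))" by simp
    then show ?thesis by blast
  next
    assume "\<exists>p s K. K \<in> CS \<and> \<phi> = map Inr p @ [Inl (enc K)] @ map Inr s \<and>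
       (\<forall>y\<in>K. \<exists>x\<in>K0. p @ perfect_shuffle y (rev y) @ s = perfect_shuffle x (rev x))"
    then obtain p s K where h: "K \<in> CS" "\<phi> = map Inr p @ [Inl (enc K)] @ map Inr s"
       "\<forall>y\<in>K. \<exists>x\<in>K0. p @ perfect_shuffle y (rev y) @ s = perfect_shuffle x (rev x)" by blast
    from split_unique[of u A v p "enc K" s] d h have us: "u = map Inr p" "A = enc K" "v = map Inr s" by auto
    from d(3) us(2) consider
        K1 where "K1 \<in> CS" "enc K1 = enc K" "[] \<in> K1" "\<alpha> = []"
      | K1 a where "K1 \<in> CS" "enc K1 = enc K" "[a] \<in> K1" "\<alpha> = [Inr a, Inr a]"
      | K1 a b where "K1 \<in> CS" "enc K1 = enc K" "\<alpha> = [Inr a, Inr b, Inl (enc (D a b K1)), Inr b, Inr a]"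
      unfolding G_def by blast
    then show ?thesis
    proof cases
      case 1
      then have "K1 = K" using inj h(1) by (meson inj_onD)
      then have "[] \<in> K" using 1 by simp
      from h(3)[rule_format, OF this] obtain x where
        x: "x \<in> K0" "p @ perfect_shuffle [] (rev []) @ s = perfect_shuffle x (rev x)" by blast
      have "\<psi> = map Inr (p @ perfect_shuffle [] (rev []) @ s)" using d us 1 by simp
      then have "\<psi> = map Inr (perfect_shuffle x (rev x))" unfolding x(2)[symmetric] by simp
      then show ?thesis using x(1) unfolding Inv_def by blast
    next
      case 2
      then have "K1 = K" using inj h(1) by (meson inj_onD)
      then have "[a] \<in> K" using 2 by simp
      from h(3)[rule_format, OF this] obtain x where
        x: "x \<in> K0" "p @ perfect_shuffle [a] (rev [a]) @ s = perfect_shuffle x (rev x)" by blast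
      have "\<psi> = map Inr (p @ perfect_shuffle [a] (rev [a]) @ s)" using d us 2 by simp
      then have "\<psi> = map Inr (perfect_shuffle x (rev x))" unfolding x(2)[symmetric] by simp
      then show ?thesis using x(1) unfolding Inv_def by blast
    next
      case 3
      then have "K1 = K" using inj h(1) by (meson inj_onD)
      have "\<psi> = map Inr (p @ [a,b]) @ [Inl (enc (D a b K))] @ map Inr ([b,a] @ s)"
        using d us 3 \<open>K1 = K\<close> by simp
      moreover have "D a b K \<in> CS" using closed h(1) by blast
      moreover have "\<forall>y\<in>D a b K. \<exists>x\<in>K0. (p @ [a,b]) @ perfect_shuffle y (rev y) @ ([b,a] @ s) = perfect_shuffle x (rev x)"
      proof
        fix y assume "y \<in> D a b K"
        then have "a # y @ [b] \<in> K" by (simp add: D_def)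
        then obtain x where "x \<in> K0" "p @ perfect_shuffle (a # y @ [b]) (rev (a # y @ [b])) @ s = perfect_shuffle x (rev x)"
          using h(3) by blast
        then show "\<exists>x\<in>K0. (p @ [a,b]) @ perfect_shuffle y (rev y) @ ([b,a] @ s) = perfect_shuffle x (rev x)"
          unfolding ps_outer by auto
      qed
      ultimately show ?thesis unfolding Inv_def by blast
    qed
  qed
qed


fun atoms :: "'a rexp \<Rightarrow> 'a set" where
  "atoms Zero = {}"
| "atoms One = {}"
| "atoms (Atom a) = {a}"
| "atoms (Plus r s) = atoms r \<union> atoms s"
| "atoms (Times r s) = atoms r \<union> atoms s"
| "atoms (Star r) = atoms r"

lemma finite_atoms: "finite (atoms r)" by (induction r) auto

lemma star_atoms: "w \<in> kleene_star A \<Longrightarrow> (\<And>u. u \<in> A \<Longrightarrow> set u \<subseteq> X) \<Longrightarrow> set w \<subseteq> X"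
  by (induction rule: kleene_star.induct) auto

lemma lang_atoms: "w \<in> lang r \<Longrightarrow> set w \<subseteq> atoms r"
proof (induction r arbitrary: w)
  case (Times r s) then show ?case by (fastforce simp: conc_def)
next
  case (Star r) then show ?case using star_atoms[of w "lang r" "atoms r"] by auto
qed auto

lemma RQ_rev: "RQ v A = rev ` LQ (rev v) (rev ` A)"
proof
  show "RQ v A \<subseteq> rev ` LQ (rev v) (rev ` A)"
  proof
    fix y assume "y \<in> RQ v A"
    then have "rev v @ rev y \<in> rev ` A" unfolding RQ_def by (metis mem_Collect_eq rev_append rev_image_eqI)
    then have "rev y \<in> LQ (rev v) (rev ` A)" by (simp add: LQ_def)
    then show "y \<in> rev ` LQ (rev v) (rev ` A)" by (rule rev_image_eqI) simp
  qed
next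
  show "rev ` LQ (rev v) (rev ` A) \<subseteq> RQ v A"
  proof
    fix y assume "y \<in> rev ` LQ (rev v) (rev ` A)"
    then obtain z where "y = rev z" "rev v @ z \<in> rev ` A" by (auto simp: LQ_def)
    then obtain t where "t \<in> A" "rev v @ z = rev t" by auto
    then have "t = rev z @ v" by (metis rev_append rev_rev_ident)
    then show "y \<in> RQ v A" using \<open>t \<in> A\<close> \<open>y = rev z\<close> by (simp add: RQ_def)
  qed
qed

lemma finite_CS: "finite ((\<lambda>(u,v). {y. u @ y @ v \<in> lang r}) ` UNIV)"
proof -
  let ?L = "lang r"
  have fRQ: "finite (range (\<lambda>v. RQ v ?L))"
  proof (rule finite_subset)
    show "range (\<lambda>v. RQ v ?L) \<subseteq> (\<lambda>X. rev ` X) ` range (\<lambda>w. LQ w (lang (revr r)))"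
      by (auto simp: RQ_rev lang_revr)
    show "finite ((\<lambda>X. rev ` X) ` range (\<lambda>w. LQ w (lang (revr r))))" using finite_LQ by blast
  qed
  have sub: "(\<lambda>(u,v). {y. u @ y @ v \<in> ?L}) ` UNIV \<subseteq> (\<Union>M \<in> range (\<lambda>v. RQ v ?L). range (\<lambda>u. LQ u M))"
    by (auto simp: RQ_def LQ_def)
  have "finite (\<Union>M \<in> range (\<lambda>v. RQ v ?L). range (\<lambda>u. LQ u M))"
  proof (rule finite_UN_I[OF fRQ])
    fix M assume "M \<in> range (\<lambda>v. RQ v ?L)"
    then obtain v where M: "M = RQ v ?L" by auto
    have "range (\<lambda>u. LQ u M) \<subseteq> (RQ v) ` range (\<lambda>w. LQ w ?L)"
      by (auto simp: M RQ_def LQ_def)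
    then show "finite (range (\<lambda>u. LQ u M))" using finite_LQ[of r] finite_subset by blast
  qed
  then show ?thesis using sub finite_subset by blast
qed


theorem mainTheorem8:
  fixes L :: "'a list set"
  assumes "regular L"
  shows "context_free (pssr L)"
proof -
  obtain r where r: "lang r = L" using assms unfolding regular_def by blast
  define CS where "CS = (\<lambda>(u,v). {y. u @ y @ v \<in> L}) ` (UNIV :: ('a list \<times> 'a list) set)"
  have fCS: "finite CS" unfolding CS_def using finite_CS[of r] r by simp
  obtain enc :: "'a list set \<Rightarrow> nat" and n where enc: "enc ` CS = {i. i < n}" "inj_on enc CS"
    using finite_imp_inj_to_nat_seg[OF fCS] by blast
  have closed: "\<forall>K\<in>CS. \<forall>a b. D a b K \<in> CS"
  proof (intro ballI allI)
    fix K a b assume "K \<in> CS"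
    then obtain u v where K: "K = {y. u @ y @ v \<in> L}" unfolding CS_def by auto
    have "D a b K = (\<lambda>(u,v). {y. u @ y @ v \<in> L}) (u @ [a], b # v)"
      by (auto simp: K D_def)
    then show "D a b K \<in> CS" unfolding CS_def by blast
  qed
  have LCS: "L \<in> CS"
  proof -
    have "L = (\<lambda>(u,v). {y. u @ y @ v \<in> L}) ([], [])" by simp
    then show ?thesis unfolding CS_def by blast
  qed
  define P where "P = G enc CS (atoms r)"
  have "P \<subseteq> (\<lambda>K. (enc K, [])) ` CS \<union> (\<lambda>(K,a). (enc K, [Inr a, Inr a])) ` (CS \<times> atoms r)
     \<union> (\<lambda>(K,a,b). (enc K, [Inr a, Inr b, Inl (enc (D a b K)), Inr b, Inr a])) ` (CS \<times> atoms r \<times> atoms r)"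
    unfolding P_def G_def
  proof (intro Un_mono)
    show "{(enc K, []) | K. K \<in> CS \<and> [] \<in> K} \<subseteq> (\<lambda>K. (enc K, [])) ` CS" by blast
    show "{(enc K, [Inr a, Inr a]) | K a. K \<in> CS \<and> a \<in> atoms r \<and> [a] \<in> K}
       \<subseteq> (\<lambda>(K,a). (enc K, [Inr a, Inr a])) ` (CS \<times> atoms r)"
    proof
      fix z assume "z \<in> {(enc K, [Inr a, Inr a]) | K a. K \<in> CS \<and> a \<in> atoms r \<and> [a] \<in> K}"
      then obtain K a where "z = (enc K, [Inr a, Inr a])" "K \<in> CS" "a \<in> atoms r" by blast
      then show "z \<in> (\<lambda>(K,a). (enc K, [Inr a, Inr a])) ` (CS \<times> atoms r)"
        by (intro image_eqI[where x="(K,a)"]) auto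
    qed
    show "{(enc K, [Inr a, Inr b, Inl (enc (D a b K)), Inr b, Inr a]) | K a b. K \<in> CS \<and> a \<in> atoms r \<and> b \<in> atoms r}
       \<subseteq> (\<lambda>(K,a,b). (enc K, [Inr a, Inr b, Inl (enc (D a b K)), Inr b, Inr a])) ` (CS \<times> atoms r \<times> atoms r)"
    proof
      fix z assume "z \<in> {(enc K, [Inr a, Inr b, Inl (enc (D a b K)), Inr b, Inr a]) | K a b. K \<in> CS \<and> a \<in> atoms r \<and> b \<in> atoms r}"
      then obtain K a b where "z = (enc K, [Inr a, Inr b, Inl (enc (D a b K)), Inr b, Inr a])" "K \<in> CS" "a \<in> atoms r" "b \<in> atoms r" by blast
      then show "z \<in> (\<lambda>(K,a,b). (enc K, [Inr a, Inr b, Inl (enc (D a b K)), Inr b, Inr a])) ` (CS \<times> atoms r \<times> atoms r)"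
        by (intro image_eqI[where x="(K,a,b)"]) auto
    qed
  qed
  moreover have "finite ((\<lambda>K. (enc K, [])) ` CS \<union> (\<lambda>(K,a). (enc K, [Inr a, Inr a])) ` (CS \<times> atoms r)
     \<union> (\<lambda>(K,a,b). (enc K, [Inr a, Inr b, Inl (enc (D a b K)), Inr b, Inr a])) ` (CS \<times> atoms r \<times> atoms r))"
    using fCS finite_atoms[of r] by (intro finite_UnI finite_imageI finite_cartesian_product)
  ultimately have fP: "finite P" by (rule finite_subset)
  have "cfg_lang P (enc L) = pssr L"
  proof
    show "cfg_lang P (enc L) \<subseteq> pssr L"
    proof
      fix w assume "w \<in> cfg_lang P (enc L)"
      then have "derives P [Inl (enc L)] (map Inr w)" by (simp add: cfg_lang_def)
      then have I: "Inv enc CS L (map Inr w)" unfolding P_def by (rule sound[OF enc(2) closed LCS])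
      show "w \<in> pssr L"
      proof (cases "\<exists>x\<in>L. (map Inr w :: (nat + 'a) list) = map Inr (perfect_shuffle x (rev x))")
        case True
        then obtain x where "x \<in> L" "map Inr w = (map Inr (perfect_shuffle x (rev x)) :: (nat + 'a) list)" by blast
        then have "w = perfect_shuffle x (rev x)" by (metis inj_Inr inj_map_eq_map)
        then show ?thesis using \<open>x \<in> L\<close> unfolding pssr_def by blast
      next
        case False
        then obtain p s K where "map Inr w = map Inr p @ [Inl (enc K)] @ map Inr s"
          using I unfolding Inv_def by blast
        then have "Inl (enc K) \<in> set (map Inr w :: (nat + 'a) list)" by simp
        then show ?thesis by auto
      qed
    qed
  next
    show "pssr L \<subseteq> cfg_lang P (enc L)"
    proof
      fix w assume "w \<in> pssr L"
      then obtain x where x: "x \<in> L" "w = perfect_shuffle x (rev x)" unfolding pssr_def by blast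
      have "set x \<subseteq> atoms r" using x(1) r lang_atoms by blast
      then have "derives P [Inl (enc L)] (map Inr (perfect_shuffle x (rev x)))"
        unfolding P_def using complete[OF closed LCS x(1)] by blast
      then show "w \<in> cfg_lang P (enc L)" using x(2) by (simp add: cfg_lang_def)
    qed
  qed
  then show ?thesis unfolding context_free_def using fP by blast
qed

end
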